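(* Under the standing setting described in the context (in particular, $\mathcal{A}$ is a nonempty compact controlled invariant set satisfying the local $\ell_p$-stabilizability assumption, and $\alpha$ satisfies the stated bounds with $\bar p\ge p$), define $\mathbb{V}_{\infty}:=\{x\in\mathbb{R}^n : \mathcal{V}(\{x\})<\infty\}$ and $\mathbb{W}_{1}:=\{x\in\mathbb{R}^n : \mathcal{W}(\{x\})<1\}$. Then $\mathbb{V}_{\infty}=\mathbb{W}_{1}=\mathcal{D}_{\mathcal{A}}$.
   Context: Let $\|\cdot\|$ be a norm on $\mathbb{R}^n$ and $\mathrm{dist}(x,\Omega):=\inf_{y\in\Omega}\|x-y\|$. Let $\mathcal{K}(\mathbb{R}^n)$ denote the nonempty compact subsets of $\mathbb{R}^n$. Consider the discrete-time system $x_{k+1}=f(x_k,u_k)$, $k\in\mathbb{Z}_+$, where $f:\mathbb{R}^n\times\mathbb{R}^m\to\mathbb{R}^n$ is continuous and the inputs satisfy $u_k\in U$ for a nonempty compact $U\subset\mathbb{R}^m$. For $x\in\mathbb{R}^n$ and an input signal $\pi:\mathbb{Z}_+\to U$, the trajectory $\varphi_x^\pi$ is defined by $\varphi_x^\pi(0)=x$, $\varphi_x^\pi(k+1)=f(\varphi_x^\pi(k),\pi(k))$. For $X\subseteq\mathbb{R}^n$ and $k\in\mathbb{Z}_+$, the reachable set is $\mathcal{R}(X,k):=\{\varphi_x^\pi(k): x\in X,\ \pi\in U^{\mathbb{Z}_+}\}$. Let $\mathcal{A}\in\mathcal{K}(\mathbb{R}^n)$ be controlled invariant: for every $x\in\mathcal{A}$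 there is $u\in U$ with $f(x,u)\in\mathcal{A}$. Assume local $\ell_p$-stabilizability: there exist $r>0$, $M\ge1$, $p>0$ and $\lambda:[0,r]\times\mathbb{Z}_+\to\mathbb{R}_+$ such that (1) for each $k$, $s\mapsto\lambda(s,k)$ is continuous, nondecreasing, $\lambda(0,k)=0$; for each $s$, $k\mapsto\lambda(s,k)$ is nonincreasing and $\lambda(s,0)\le s$; (2) $\sum_{k=0}^\infty\lambda(r,k)^p<\infty$; (3) for every $x$ with $\mathrm{dist}(x,\mathcal{A})\le r$ there exists $\pi\in U^{\mathbb{Z}_+}$ with $\mathrm{dist}(\varphi_x^\pi(k),\mathcal{A})\le M\lambda(\mathrm{dist}(x,\mathcal{A}),k)$ for all $k\in\mathbb{Z}_+$. The domain of stabilization is $\mathcal{D}_{\mathcal{A}}:=\{x\in\mathbb{R}^n:\exists\pi\in U^{\mathbb{Z}_+}\text{ with }\lim_{k\to\infty}\mathrm{dist}(\varphi_x^\pi(k),\mathcal{A})=0\}$. Let $\alpha:\mathbb{R}^n\to\mathbb{R}_+$ be continuous with $\underline{\alpha}\,\mathrm{dist}(x,\mathcal{A})^{\bar p}\le\alpha(x)\le\overline{\alpha}\,\mathrm{dist}(x,\mathcal{A})^{\bar p}$ for all $x$, for some constants $\underline{\alpha},\overline{\alpha}>0$ and $\bar p\ge p$. Define $\Psi(X):=\inf_{y\in X}\alpha(y)$ for $X\in\mathcal{K}(\mathbb{R}^n)$, $\mathcal{V}(X):=\sum_{k=0}^\infty\Psi(\mathcal{R}(X,k))\in[0,\infty]$,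 and $\mathcal{W}(X):=1-\exp(-\mathcal{V}(X))$ with the convention $\exp(-\infty)=0$. *)

theory Defs
  imports "HOL-Analysis.Analysis"
begin

definition is_norm :: "('a::real_vector \<Rightarrow> real) \<Rightarrow> bool" where
  "is_norm N \<longleftrightarrow> (\<forall>x. N x \<ge> 0) \<and> (\<forall>x. N x = 0 \<longleftrightarrow> x = 0)
     \<and> (\<forall>c x. N (c *\<^sub>R x) = \<bar>c\<bar> * N x) \<and> (\<forall>x y. N (x + y) \<le> N x + N y)"

definition set_dist :: "('a::real_vector \<Rightarrow> real) \<Rightarrow> 'a \<Rightarrow> 'a set \<Rightarrow> real" where
  "set_dist N x \<Omega> = Inf ((\<lambda>y. N (x - y)) ` \<Omega>)"

primrec traj :: "('a \<Rightarrow> 'b \<Rightarrow> 'a) \<Rightarrow> 'a \<Rightarrow> (nat \<Rightarrow> 'b) \<Rightarrow> nat \<Rightarrow> 'a" where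
  "traj f x \<pi> 0 = x"
| "traj f x \<pi> (Suc k) = f (traj f x \<pi> k) (\<pi> k)"

definition reach :: "('a \<Rightarrow> 'b \<Rightarrow> 'a) \<Rightarrow> 'b set \<Rightarrow> 'a set \<Rightarrow> nat \<Rightarrow> 'a set" where
  "reach f U X k = {traj f x \<pi> k | x \<pi>. x \<in> X \<and> (\<forall>j. \<pi> j \<in> U)}"

definition Psi :: "('a \<Rightarrow> real) \<Rightarrow> 'a set \<Rightarrow> real" where
  "Psi \<alpha> X = Inf (\<alpha> ` X)"

definition Vfun :: "('a \<Rightarrow> 'b \<Rightarrow> 'a) \<Rightarrow> 'b set \<Rightarrow> ('a \<Rightarrow> real) \<Rightarrow> 'a set \<Rightarrow> ennreal" where
  "Vfun f U \<alpha> X = (\<Sum>k. ennreal (Psi \<alpha> (reach f U X k)))"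

definition Wfun :: "('a \<Rightarrow> 'b \<Rightarrow> 'a) \<Rightarrow> 'b set \<Rightarrow> ('a \<Rightarrow> real) \<Rightarrow> 'a set \<Rightarrow> real" where
  "Wfun f U \<alpha> X = (if Vfun f U \<alpha> X = \<infinity> then 1 else 1 - exp (- enn2real (Vfun f U \<alpha> X)))"

definition stab_domain :: "('a::real_vector \<Rightarrow> real) \<Rightarrow> ('a \<Rightarrow> 'b \<Rightarrow> 'a) \<Rightarrow> 'b set \<Rightarrow> 'a set \<Rightarrow> 'a set" where
  "stab_domain N f U A = {x. \<exists>\<pi>. (\<forall>k. \<pi> k \<in> U) \<and>
      (\<lambda>k. set_dist N (traj f x \<pi> k) A) \<longlonglongrightarrow> 0}"

end

theory Submission
  imports Defs
begin

lemma traj_prefix: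
  "i \<le> k \<Longrightarrow> traj f x (\<lambda>j. if j < k then \<pi>1 j else \<pi>2 (j - k)) i = traj f x \<pi>1 i"
  by (induction i) auto

lemma traj_concat:
  "traj f x (\<lambda>j. if j < k then \<pi>1 j else \<pi>2 (j - k)) (k + j) = traj f (traj f x \<pi>1 k) \<pi>2 j"
  by (induction j) (auto simp: traj_prefix)

lemma concat_in_reach:
  assumes "\<forall>j. \<pi>1 j \<in> U" "\<forall>j. \<pi>2 j \<in> U"
  shows "traj f (traj f x \<pi>1 k) \<pi>2 j \<in> reach f U {x} (k + j)"
proof -
  have "\<forall>j. (if j < k then \<pi>1 j else \<pi>2 (j - k)) \<in> U" using assms by auto
  then show ?thesis unfolding reach_def
    by (auto intro!: exI[of _ x] exI[of _ "\<lambda>j. if j < k then \<pi>1 j else \<pi>2 (j - k)"]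
        simp: traj_concat)
qed

lemma set_dist_nonneg:
  assumes "is_norm N" "A \<noteq> {}"
  shows "set_dist N x A \<ge> 0"
  using assms unfolding set_dist_def is_norm_def
  by (auto intro!: cInf_greatest)

theorem theorem2:
  fixes N :: "real^'n \<Rightarrow> real"
    and f :: "real^'n \<Rightarrow> real^'m \<Rightarrow> real^'n"
    and U :: "(real^'m) set"
    and A :: "(real^'n) set"
    and r M p :: real
    and lam :: "real \<Rightarrow> nat \<Rightarrow> real"
    and \<alpha> :: "real^'n \<Rightarrow> real"
    and a_lo a_hi pbar :: real
  assumes norm: "is_norm N"
    and f_cont: "continuous_on UNIV (\<lambda>(x, u). f x u)"
    and U_compact: "compact U" and U_ne: "U \<noteq> {}"
    and A_compact: "compact A" and A_ne: "A \<noteq> {}"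
    and A_inv: "\<forall>x\<in>A. \<exists>u\<in>U. f x u \<in> A"
    and r_pos: "r > 0" and M_ge: "M \<ge> 1" and p_pos: "p > 0"
    and lam_nonneg: "\<forall>s\<in>{0..r}. \<forall>k. lam s k \<ge> 0"
    and lam_cont: "\<forall>k. continuous_on {0..r} (\<lambda>s. lam s k)"
    and lam_mono: "\<forall>k. mono_on {0..r} (\<lambda>s. lam s k)"
    and lam_zero: "\<forall>k. lam 0 k = 0"
    and lam_decr: "\<forall>s\<in>{0..r}. \<forall>k. lam s (Suc k) \<le> lam s k"
    and lam_init: "\<forall>s\<in>{0..r}. lam s 0 \<le> s"
    and lam_sum: "summable (\<lambda>k. lam r k powr p)"
    and stab: "\<forall>x. set_dist N x A \<le> r \<longrightarrow>
                 (\<exists>\<pi>. (\<forall>k. \<pi> k \<in> U) \<and>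
                   (\<forall>k. set_dist N (traj f x \<pi> k) A \<le> M * lam (set_dist N x A) k))"
    and \<alpha>_cont: "continuous_on UNIV \<alpha>"
    and a_lo_pos: "a_lo > 0" and a_hi_pos: "a_hi > 0" and pbar_ge: "pbar \<ge> p"
    and \<alpha>_bounds: "\<forall>x. a_lo * set_dist N x A powr pbar \<le> \<alpha> x \<and>
                      \<alpha> x \<le> a_hi * set_dist N x A powr pbar"
  shows "{x. Vfun f U \<alpha> {x} < \<infinity>} = {x. Wfun f U \<alpha> {x} < 1}
         \<and> {x. Wfun f U \<alpha> {x} < 1} = stab_domain N f U A"
proof -
  have dnn: "\<And>y. set_dist N y A \<ge> 0" using set_dist_nonneg[OF norm A_ne] .
  have \<alpha>nn: "\<And>y. \<alpha> y \<ge> 0"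
    by (meson \<alpha>_bounds a_lo_pos less_imp_le order_trans powr_ge_zero mult_nonneg_nonneg)
  have reach_ne: "\<And>x k. reach f U {x} k \<noteq> {}"
  proof -
    fix x k
    obtain u where "u \<in> U" using U_ne by blast
    then have "traj f x (\<lambda>_. u) k \<in> reach f U {x} k" unfolding reach_def by blast
    then show "reach f U {x} k \<noteq> {}" by blast
  qed
  define P where "P x k = Psi \<alpha> (reach f U {x} k)" for x k
  have Pnn: "P x k \<ge> 0" for x k
    unfolding P_def Psi_def using reach_ne[of x k] \<alpha>nn by (auto intro!: cInf_greatest)
  have Ple: "P x k \<le> \<alpha> y" if "y \<in> reach f U {x} k" for x k y
    unfolding P_def Psi_def using that \<alpha>nn
    by (intro cInf_lower) (auto simp: bdd_below_def)
  have Vsum: "Vfun f U \<alpha> {x} < \<infinity> \<longleftrightarrow> summable (P x)" for x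
  proof -
    have e: "Vfun f U \<alpha> {x} = (\<Sum>k. ennreal (P x k))" unfolding Vfun_def P_def ..
    show ?thesis unfolding e
      using ennreal_suminf_neq_top[of "P x"] summable_suminf_not_top[of "P x"] Pnn[of x]
      by (metis infinity_ennreal_def top.not_eq_extremum)
  qed
  have lamr0: "lam r \<longlonglongrightarrow> 0"
  proof -
    have r0: "r \<in> {0..r}" using r_pos by auto
    have "(\<lambda>k. (lam r k powr p) powr (1/p)) \<longlonglongrightarrow> 0"
      by (rule tendsto_zero_powrI[where b="1/p", OF summable_LIMSEQ_zero[OF lam_sum]]) (use p_pos in auto)
    moreover have "(lam r k powr p) powr (1/p) = lam r k" for k
      using lam_nonneg r0 p_pos by (simp add: powr_powr)
    ultimately show ?thesis by simp
  qed
  have part1: "{x. Vfun f U \<alpha> {x} < \<infinity>} = {x. Wfun f U \<alpha> {x} < 1}"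
    unfolding Wfun_def by (simp add: top.not_eq_extremum)
  have part2: "Vfun f U \<alpha> {x} < \<infinity> \<longleftrightarrow> x \<in> stab_domain N f U A" for x
  proof
    assume "Vfun f U \<alpha> {x} < \<infinity>"
    then have "P x \<longlonglongrightarrow> 0" using Vsum summable_LIMSEQ_zero by blast
    moreover have c: "a_lo * r powr pbar > 0" using a_lo_pos r_pos by simp
    ultimately obtain no where "\<forall>n\<ge>no. norm (P x n - 0) < a_lo * r powr pbar"
      using LIMSEQ_D by blast
    then obtain k where "\<bar>P x k - 0\<bar> < a_lo * r powr pbar" by auto
    then have "Inf (\<alpha> ` reach f U {x} k) < a_lo * r powr pbar" using Pnn[of x k]
      unfolding P_def Psi_def by simp
    then obtain y where y: "y \<in> reach f U {x} k" "\<alpha> y < a_lo * r powr pbar"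
      using cInf_lessD[of "\<alpha> ` reach f U {x} k"] reach_ne by blast
    from y(1) obtain \<pi>1 where pi1: "\<forall>j. \<pi>1 j \<in> U" "y = traj f x \<pi>1 k"
      unfolding reach_def by auto
    have "a_lo * set_dist N y A powr pbar < a_lo * r powr pbar" using y(2) \<alpha>_bounds
      by (meson le_less_trans)
    then have lt: "set_dist N y A powr pbar < r powr pbar" using a_lo_pos by simp
    have dr: "set_dist N y A \<le> r"
    proof (rule ccontr)
      assume "\<not> ?thesis"
      then have "r powr pbar \<le> set_dist N y A powr pbar"
        using powr_mono2[of pbar r "set_dist N y A"] r_pos pbar_ge p_pos by auto
      then show False using lt by simp
    qed
    then obtain \<pi>2 where pi2: "\<forall>j. \<pi>2 j \<in> U"
        "\<forall>j. set_dist N (traj f y \<pi>2 j) A \<le> M * lam (set_dist N y A) j"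
      using stab by blast
    define \<pi> where "\<pi> = (\<lambda>j. if j < k then \<pi>1 j else \<pi>2 (j - k))"
    have piU: "\<forall>j. \<pi> j \<in> U" using pi1 pi2 unfolding \<pi>_def by auto
    have "(\<lambda>j. set_dist N (traj f x \<pi> (j + k)) A) \<longlonglongrightarrow> 0"
    proof (rule real_tendsto_sandwich[where f="\<lambda>_. 0" and h="\<lambda>j. M * lam r j"])
      show "\<forall>\<^sub>F j in sequentially. 0 \<le> set_dist N (traj f x \<pi> (j + k)) A" using dnn by simp
      show "\<forall>\<^sub>F j in sequentially. set_dist N (traj f x \<pi> (j + k)) A \<le> M * lam r j"
      proof (intro always_eventually allI)
        fix j
        have "traj f x \<pi> (j + k) = traj f y \<pi>2 j"
          using traj_concat[of f x k \<pi>1 \<pi>2 j] pi1 unfolding \<pi>_def by (simp add: add.commute)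
        moreover have "lam (set_dist N y A) j \<le> lam r j"
          using lam_mono dr dnn[of y] r_pos unfolding mono_on_def by auto
        ultimately show "set_dist N (traj f x \<pi> (j + k)) A \<le> M * lam r j"
          using pi2(2)[rule_format, of j] M_ge
          by (metis dual_order.trans mult_le_cancel_left_pos less_le_trans zero_less_one)
      qed
      show "(\<lambda>_. 0::real) \<longlonglongrightarrow> 0" by simp
      show "(\<lambda>j. M * lam r j) \<longlonglongrightarrow> 0" using tendsto_mult_right_zero[OF lamr0] by simp
    qed
    then have "(\<lambda>j. set_dist N (traj f x \<pi> j) A) \<longlonglongrightarrow> 0" by (rule LIMSEQ_offset)
    then show "x \<in> stab_domain N f U A" unfolding stab_domain_def using piU by blast
  next
    assume "x \<in> stab_domain N f U A"
    then obtain \<pi>1 where pi1: "\<forall>j. \<pi>1 j \<in> U"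
      "(\<lambda>k. set_dist N (traj f x \<pi>1 k) A) \<longlonglongrightarrow> 0"
      unfolding stab_domain_def by blast
    then obtain no where "\<forall>n\<ge>no. norm (set_dist N (traj f x \<pi>1 n) A - 0) < r"
      using LIMSEQ_D r_pos by blast
    then obtain k where "\<bar>set_dist N (traj f x \<pi>1 k) A - 0\<bar> < r" by auto
    then have dr: "set_dist N (traj f x \<pi>1 k) A \<le> r" by simp
    define y where "y = traj f x \<pi>1 k"
    obtain \<pi>2 where pi2: "\<forall>j. \<pi>2 j \<in> U"
        "\<forall>j. set_dist N (traj f y \<pi>2 j) A \<le> M * lam (set_dist N y A) j"
      using stab dr unfolding y_def by blast
    define C where "C = a_hi * (M powr pbar * r powr (pbar - p))"
    define g where "g j = (if j < k then P x j else C * lam r (j - k) powr p)" for j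
    have r0: "r \<in> {0..r}" using r_pos by auto
    have "summable (\<lambda>j. C * lam r j powr p)" using lam_sum by (rule summable_mult)
    then have "summable (\<lambda>j. g (j + k))" unfolding g_def by simp
    then have gs: "summable g" by (rule summable_iff_shift[THEN iffD1])
    have "summable (P x)"
    proof (rule summable_comparison_test[OF _ gs], intro exI[of _ k] allI impI)
      fix i assume "i \<ge> k"
      then obtain j where i: "i = k + j" using \<open>i \<ge> k\<close> by (metis le_add_diff_inverse)
      have le1: "P x i \<le> \<alpha> (traj f y \<pi>2 j)"
        using Ple concat_in_reach[OF pi1(1) pi2(1), of f x k j] i unfolding y_def by simp
      have ly: "lam (set_dist N y A) j \<le> lam r j"
        using lam_mono dr dnn[of y] r_pos unfolding mono_on_def y_def by auto
      have l0: "0 \<le> lam r j" using lam_nonneg r0 by auto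
      have lr: "lam r j \<le> r"
      proof -
        have "lam r j \<le> lam r 0"
          by (induction j) (use lam_decr r0 order_trans in blast)+
        moreover have "lam r 0 \<le> r" using lam_init r0 by blast
        ultimately show ?thesis by linarith
      qed
      have "set_dist N (traj f y \<pi>2 j) A \<le> M * lam r j"
        using pi2(2)[rule_format, of j] ly M_ge
        by (metis dual_order.trans mult_le_cancel_left_pos less_le_trans zero_less_one)
      then have "set_dist N (traj f y \<pi>2 j) A powr pbar \<le> (M * lam r j) powr pbar"
        using powr_mono2 dnn pbar_ge p_pos by (meson less_le_trans less_imp_le)
      also have "\<dots> = M powr pbar * (lam r j powr p * lam r j powr (pbar - p))"
        using M_ge l0 by (simp add: powr_mult powr_add[symmetric])
      also have "\<dots> \<le> M powr pbar * (lam r j powr p * r powr (pbar - p))"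
        using powr_mono2[of "pbar - p" "lam r j" r] pbar_ge l0 lr
        by (intro mult_left_mono) auto
      finally have "\<alpha> (traj f y \<pi>2 j) \<le> a_hi * (M powr pbar * (lam r j powr p * r powr (pbar - p)))"
        using \<alpha>_bounds a_hi_pos by (meson mult_left_mono order_trans less_imp_le)
      then have "P x i \<le> g i" using le1 i unfolding g_def C_def by (simp add: algebra_simps)
      then show "norm (P x i) \<le> g i" using Pnn by simp
    qed
    then show "Vfun f U \<alpha> {x} < \<infinity>" using Vsum by blast
  qed
  show ?thesis using part1 part2 by blast
qed

end
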